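(* Let $\mathcal{A}$ be a UFA with $n \ge 0$ states. Then its forward determinization has at most $\sqrt{n+1}\cdot 2^{n/2}$ states or its backward determinization has at most $\sqrt{n+1}\cdot 2^{n/2}$ states.
   Context: An NFA is a quintuple $\mathcal{A} = (Q,\Sigma,\delta,I,F)$ with $Q$ finite set of states, $\Sigma$ finite alphabet, $\delta \subseteq Q\times\Sigma\times Q$, initial states $I\subseteq Q$, accepting states $F \subseteq Q$. Write $q \xrightarrow{w} r$ if there is a run (sequence of transitions) from $q$ to $r$ reading $w$. A UFA is an NFA in which every word has at most one accepting run (run starting in $I$ and ending in $F$). For $S\subseteq Q$ and $w\in\Sigma^*$, $\delta(S,w) = \{r \mid \exists q\in S.\ q\xrightarrow{w} r\}$ and $\delta^{-1}(w,S) = \{r \mid \exists q \in S.\ r \xrightarrow{w} q\}$. The forward determinization of $\mathcal{A}$ has state set $\{\delta(I,w) \mid w\in\Sigma^*\}$ (the standard subset construction restricted to reachable subsets); the backward determinization has state set $\{\delta^{-1}(w,F)\mid w \in\Sigma^*\}$. *)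

theory Defs
  imports Complex_Main
begin

record ('q, 'a) nfa =
  states :: "'q set"
  alphabet :: "'a set"
  trans :: "('q \<times> 'a \<times> 'q) set"
  init :: "'q set"
  final :: "'q set"

definition wf_nfa :: "('q, 'a) nfa \<Rightarrow> bool" where
  "wf_nfa A \<longleftrightarrow> finite (states A) \<and> finite (alphabet A)
     \<and> trans A \<subseteq> states A \<times> alphabet A \<times> states A
     \<and> init A \<subseteq> states A \<and> final A \<subseteq> states A"

definition is_run :: "('q, 'a) nfa \<Rightarrow> 'q list \<Rightarrow> 'a list \<Rightarrow> bool" where
  "is_run A qs w \<longleftrightarrow> length qs = Suc (length w)
     \<and> (\<forall>i < length w. (qs ! i, w ! i, qs ! Suc i) \<in> trans A)"

definition accepting_run :: "('q, 'a) nfa \<Rightarrow> 'q list \<Rightarrow> 'a list \<Rightarrow> bool" where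
  "accepting_run A qs w \<longleftrightarrow> is_run A qs w \<and> hd qs \<in> init A \<and> last qs \<in> final A"

definition is_ufa :: "('q, 'a) nfa \<Rightarrow> bool" where
  "is_ufa A \<longleftrightarrow> wf_nfa A \<and>
     (\<forall>w \<in> lists (alphabet A). \<forall>qs rs. accepting_run A qs w \<and> accepting_run A rs w \<longrightarrow> qs = rs)"

definition reach :: "('q, 'a) nfa \<Rightarrow> 'q \<Rightarrow> 'a list \<Rightarrow> 'q \<Rightarrow> bool" where
  "reach A q w r \<longleftrightarrow> (\<exists>qs. is_run A qs w \<and> hd qs = q \<and> last qs = r)"

definition delta_set :: "('q, 'a) nfa \<Rightarrow> 'q set \<Rightarrow> 'a list \<Rightarrow> 'q set" where
  "delta_set A S w = {r. \<exists>q \<in> S. reach A q w r}"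

definition delta_inv :: "('q, 'a) nfa \<Rightarrow> 'a list \<Rightarrow> 'q set \<Rightarrow> 'q set" where
  "delta_inv A w S = {r. \<exists>q \<in> S. reach A r w q}"

definition fwd_det_states :: "('q, 'a) nfa \<Rightarrow> 'q set set" where
  "fwd_det_states A = {delta_set A (init A) w | w. w \<in> lists (alphabet A)}"

definition bwd_det_states :: "('q, 'a) nfa \<Rightarrow> 'q set set" where
  "bwd_det_states A = {delta_inv A w (final A) | w. w \<in> lists (alphabet A)}"

end

theory Submission
  imports Defs
begin

lemma split_card:
  fixes e :: 'a and F :: "'a set set"
  assumes "finite F"
  defines "P \<equiv> (\<lambda>X. X - {e}) ` F"
      and "P2 \<equiv> {X \<in> F. e \<notin> X \<and> insert e X \<in> F}"
  shows "card F = card P + card P2" "P2 \<subseteq> P"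
proof -
  define F0 where "F0 = {X\<in>F. e \<notin> X}"
  define F1 where "F1 = {X\<in>F. e \<in> X}"
  have fin0: "finite F0" and fin1: "finite F1" using assms(1) by (auto simp: F0_def F1_def)
  have "F = F0 \<union> F1" "F0 \<inter> F1 = {}" by (auto simp: F0_def F1_def)
  hence c1: "card F = card F0 + card F1" using fin0 fin1 card_Un_disjoint by metis
  have inj: "inj_on (\<lambda>X. X - {e}) F1"
    by (rule inj_onI) (metis (mono_tags, lifting) F1_def insert_Diff mem_Collect_eq)
  have c2: "card ((\<lambda>X. X - {e}) ` F1) = card F1" using card_image[OF inj] .
  have PU: "P = F0 \<union> (\<lambda>X. X - {e}) ` F1"
  proof (rule set_eqI)
    fix Z show "Z \<in> P \<longleftrightarrow> Z \<in> F0 \<union> (\<lambda>X. X - {e}) ` F1"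
    proof
      assume "Z \<in> P"
      then obtain X where X: "X \<in> F" "Z = X - {e}" unfolding P_def by blast
      show "Z \<in> F0 \<union> (\<lambda>X. X - {e}) ` F1"
      proof (cases "e \<in> X")
        case True then show ?thesis using X unfolding F1_def by blast
      next
        case False then have "Z = X" using X by simp
        then show ?thesis using X False unfolding F0_def by blast
      qed
    next
      assume "Z \<in> F0 \<union> (\<lambda>X. X - {e}) ` F1"
      then show "Z \<in> P"
      proof
        assume "Z \<in> F0" then have "Z \<in> F" "Z = Z - {e}" unfolding F0_def by auto
        then show ?thesis unfolding P_def by (rule rev_image_eqI)
      next
        assume "Z \<in> (\<lambda>X. X - {e}) ` F1" then show ?thesis unfolding P_def F1_def by blast
      qed
    qed
  qed
  have PI: "P2 = F0 \<inter> (\<lambda>X. X - {e}) ` F1"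
  proof (rule set_eqI)
    fix Z show "Z \<in> P2 \<longleftrightarrow> Z \<in> F0 \<inter> (\<lambda>X. X - {e}) ` F1"
    proof
      assume Z: "Z \<in> P2"
      hence "insert e Z \<in> F1" "Z = insert e Z - {e}" unfolding P2_def F1_def by auto
      hence "Z \<in> (\<lambda>X. X - {e}) ` F1" by (rule rev_image_eqI)
      then show "Z \<in> F0 \<inter> (\<lambda>X. X - {e}) ` F1" using Z unfolding P2_def F0_def by blast
    next
      assume Z: "Z \<in> F0 \<inter> (\<lambda>X. X - {e}) ` F1"
      then obtain X where X: "X \<in> F" "e \<in> X" "Z = X - {e}" unfolding F1_def by blast
      hence "insert e Z = X" by auto
      then show "Z \<in> P2" using Z X unfolding P2_def F0_def by blast
    qed
  qed
  have "card F0 + card ((\<lambda>X. X - {e}) ` F1) = card P + card P2"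
    unfolding PU PI by (rule card_Un_Int) (use fin0 fin1 in auto)
  thus "card F = card P + card P2" using c1 c2 by simp
  show "P2 \<subseteq> P" using PU PI by blast
qed

lemma alg:
  fixes p x r y :: nat
  assumes "x \<le> p" "y \<le> r"
  shows "(p + x) * (r + y) \<le> 2 * (p * r + x * y)"
proof -
  obtain a where a: "p = x + a" using assms(1) le_Suc_ex by blast
  obtain b where b: "r = y + b" using assms(2) le_Suc_ex by blast
  show ?thesis unfolding a b by (simp add: algebra_simps)
qed

lemma disj_bound:
  assumes "finite S"
  shows "\<lbrakk>F \<subseteq> Pow S; G \<subseteq> Pow S; \<forall>X\<in>F. \<forall>Y\<in>G. X \<inter> Y = {}\<rbrakk>
         \<Longrightarrow> card F * card G \<le> 2 ^ card S"
  using assms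
proof (induction S arbitrary: F G rule: finite_induct)
  case empty
  have "card F \<le> 1" using card_mono[of "{{}}" F] empty by auto
  moreover have "card G \<le> 1" using card_mono[of "{{}}" G] empty by auto
  ultimately show ?case using mult_le_mono[of "card F" 1 "card G" 1] by simp
next
  case (insert e S)
  have fF: "finite F" by (rule finite_subset[OF insert.prems(1)]) (simp add: insert.hyps)
  have fG: "finite G" by (rule finite_subset[OF insert.prems(2)]) (simp add: insert.hyps)
  define P where "P \<equiv> (\<lambda>X. X - {e}) ` F"
  define P2 where "P2 \<equiv> {X \<in> F. e \<notin> X \<and> insert e X \<in> F}"
  define Q where "Q \<equiv> (\<lambda>X. X - {e}) ` G"
  define Q2 where "Q2 \<equiv> {X \<in> G. e \<notin> X \<and> insert e X \<in> G}"
  note sF = split_card[OF fF, of e, folded P_def P2_def]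
  note sG = split_card[OF fG, of e, folded Q_def Q2_def]
  have "card P * card Q \<le> 2 ^ card S"
    apply (rule insert.IH)
    using insert.prems unfolding P_def Q_def by blast+
  moreover have "card P2 * card Q2 = 0"
  proof (rule ccontr)
    assume "card P2 * card Q2 \<noteq> 0"
    then obtain X Y where "X \<in> P2" "Y \<in> Q2" by (metis card.empty ex_in_conv mult_is_0)
    hence "insert e X \<in> F" "insert e Y \<in> G" unfolding P2_def Q2_def by auto
    hence "insert e X \<inter> insert e Y = {}" using insert.prems(3) by (meson)
    thus False by simp
  qed
  moreover have fP: "finite P" "finite Q" unfolding P_def Q_def using fF fG by auto
  moreover have "card F * card G \<le> 2 * (card P * card Q + card P2 * card Q2)"
    unfolding sF(1) sG(1) by (rule alg; rule card_mono; use fP sF sG in auto)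
  ultimately have "card F * card G \<le> 2 * 2 ^ card S" by (metis add.right_neutral le_trans mult_le_mono2)
  thus ?case using insert by simp
qed

lemma one_bound:
  assumes "finite S"
  shows "\<lbrakk>F \<subseteq> Pow S; G \<subseteq> Pow S; \<forall>X\<in>F. \<forall>Y\<in>G. card (X \<inter> Y) \<le> 1\<rbrakk>
         \<Longrightarrow> card F * card G \<le> (card S + 1) * 2 ^ card S"
  using assms
proof (induction S arbitrary: F G rule: finite_induct)
  case empty
  have "card F \<le> 1" using card_mono[of "{{}}" F] empty by auto
  moreover have "card G \<le> 1" using card_mono[of "{{}}" G] empty by auto
  ultimately show ?case using mult_le_mono[of "card F" 1 "card G" 1] by simp
next
  case (insert e S)
  have fF: "finite F" by (rule finite_subset[OF insert.prems(1)]) (simp add: insert.hyps)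
  have fG: "finite G" by (rule finite_subset[OF insert.prems(2)]) (simp add: insert.hyps)
  define P where "P \<equiv> (\<lambda>X. X - {e}) ` F"
  define P2 where "P2 \<equiv> {X \<in> F. e \<notin> X \<and> insert e X \<in> F}"
  define Q where "Q \<equiv> (\<lambda>X. X - {e}) ` G"
  define Q2 where "Q2 \<equiv> {X \<in> G. e \<notin> X \<and> insert e X \<in> G}"
  note sF = split_card[OF fF, of e, folded P_def P2_def]
  note sG = split_card[OF fG, of e, folded Q_def Q2_def]
  have "card P * card Q \<le> (card S + 1) * 2 ^ card S"
  proof (rule insert.IH)
    show "P \<subseteq> Pow S" "Q \<subseteq> Pow S" using insert.prems unfolding P_def Q_def by blast+
    show "\<forall>X\<in>P. \<forall>Y\<in>Q. card (X \<inter> Y) \<le> 1"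
    proof (intro ballI)
      fix X Y assume "X \<in> P" "Y \<in> Q"
      then obtain X0 Y0 where "X0 \<in> F" "Y0 \<in> G" "X = X0 - {e}" "Y = Y0 - {e}"
        unfolding P_def Q_def by blast
      moreover have "finite (X0 \<inter> Y0)" using \<open>X0 \<in> F\<close> insert.prems insert.hyps by (meson PowD finite_Int finite_insert rev_finite_subset subsetD)
      ultimately show "card (X \<inter> Y) \<le> 1" using insert.prems(3)
        by (meson Diff_Int_distrib2 Diff_subset card_mono le_trans Int_mono)
    qed
  qed
  moreover have "card P2 * card Q2 \<le> 2 ^ card S"
  proof (rule disj_bound[OF insert.hyps(1)])
    show "P2 \<subseteq> Pow S" "Q2 \<subseteq> Pow S" using insert.prems unfolding P2_def Q2_def by blast+
    show "\<forall>X\<in>P2. \<forall>Y\<in>Q2. X \<inter> Y = {}"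
    proof (intro ballI)
      fix X Y assume "X \<in> P2" "Y \<in> Q2"
      hence h: "insert e X \<in> F" "insert e Y \<in> G" "e \<notin> X" "X \<subseteq> S"
        using insert.prems unfolding P2_def Q2_def by auto
      have "finite (X \<inter> Y)" using h insert.hyps by (simp add: finite_subset)
      moreover have "card (insert e X \<inter> insert e Y) \<le> 1" using insert.prems(3) h(1,2) by blast
      moreover have "insert e X \<inter> insert e Y = insert e (X \<inter> Y)" by auto
      ultimately show "X \<inter> Y = {}" using h by (simp add: card_insert_if) 
    qed
  qed
  ultimately have "2 * (card P * card Q + card P2 * card Q2) \<le> 2 * ((card S + 1) * 2 ^ card S + 2 ^ card S)"
    by (intro mult_le_mono2 add_mono)
  moreover have fP: "finite P" "finite Q" unfolding P_def Q_def using fF fG by auto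
  moreover have "card F * card G \<le> 2 * (card P * card Q + card P2 * card Q2)"
    unfolding sF(1) sG(1) by (rule alg; rule card_mono; use fP sF sG in auto)
  ultimately have "card F * card G \<le> 2 * ((card S + 1) * 2 ^ card S + 2 ^ card S)" by linarith
  thus ?case using insert by (simp add: algebra_simps)
qed

lemma nth_len_last: "length qs = Suc n \<Longrightarrow> qs ! n = last qs"
  by (cases qs rule: rev_cases) (auto simp: nth_append)

lemma concat_nth:
  assumes "length qs = Suc (length u)" "rs \<noteq> []" "last qs = hd rs"
      "length u \<le> i" "i < length u + length rs"
  shows "(qs @ tl rs) ! i = rs ! (i - length u)"
proof (cases "i = length u")
  case True
  hence "(qs @ tl rs) ! i = qs ! length u" using assms(1) by (simp add: nth_append)
  also have "\<dots> = last qs" using assms(1) by (rule nth_len_last)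
  also have "\<dots> = rs ! 0" using assms(2,3) by (simp add: hd_conv_nth)
  finally show ?thesis using True by simp
next
  case False
  hence "(qs @ tl rs) ! i = tl rs ! (i - length qs)" using assms(1,4) by (simp add: nth_append)
  also have "\<dots> = rs ! Suc (i - length qs)" using assms False by (intro nth_tl) auto
  finally show ?thesis using assms(1,4) False by (simp add: Suc_diff_Suc)
qed

lemma run_concat:
  assumes "is_run A qs u" "is_run A rs v" "last qs = hd rs"
  shows "is_run A (qs @ tl rs) (u @ v)"
  unfolding is_run_def
proof (intro conjI allI impI)
  have l1: "length qs = Suc (length u)" and l2: "length rs = Suc (length v)"
    using assms by (auto simp: is_run_def)
  thus "length (qs @ tl rs) = Suc (length (u @ v))" by simp
  fix i assume i: "i < length (u @ v)"
  have rne: "rs \<noteq> []" using l2 by auto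
  show "((qs @ tl rs) ! i, (u @ v) ! i, (qs @ tl rs) ! Suc i) \<in> trans A"
  proof (cases "i < length u")
    case True
    hence "(qs @ tl rs) ! i = qs ! i" "(qs @ tl rs) ! Suc i = qs ! Suc i" "(u @ v) ! i = u ! i"
      using l1 by (auto simp: nth_append)
    thus ?thesis using assms(1) True by (simp add: is_run_def)
  next
    case False
    have "(qs @ tl rs) ! i = rs ! (i - length u)"
      by (rule concat_nth) (use l1 l2 rne assms(3) False i in auto)
    moreover have "(qs @ tl rs) ! Suc i = rs ! (Suc i - length u)"
      by (rule concat_nth) (use l1 l2 rne assms(3) False i in auto)
    moreover have "(u @ v) ! i = v ! (i - length u)" using False by (simp add: nth_append)
    moreover have "i - length u < length v" using False i by auto
    moreover have "Suc i - length u = Suc (i - length u)" using False by auto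
    ultimately show ?thesis using assms(2) by (simp add: is_run_def)
  qed
qed

lemma concat_hd_last:
  assumes "is_run A qs u" "is_run A rs v" "last qs = hd rs"
  shows "hd (qs @ tl rs) = hd qs" "last (qs @ tl rs) = last rs" "(qs @ tl rs) ! length u = last qs"
proof -
  have l1: "length qs = Suc (length u)" and l2: "length rs = Suc (length v)"
    using assms by (auto simp: is_run_def)
  show "hd (qs @ tl rs) = hd qs" using l1 by (cases qs) auto
  show "last (qs @ tl rs) = last rs"
  proof (cases "tl rs = []")
    case True
    then obtain x where "rs = [x]" using l2 by (cases rs) auto
    thus ?thesis using assms(3) True by simp
  next
    case False thus ?thesis using l2 by (cases rs) auto
  qed
  show "(qs @ tl rs) ! length u = last qs" using l1 nth_len_last[OF l1] by (simp add: nth_append)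
qed

lemma reach_fwd_states:
  assumes "wf_nfa A" "q \<in> states A" "reach A q w r"
  shows "r \<in> states A"
proof -
  obtain qs where qs: "is_run A qs w" "hd qs = q" "last qs = r" using assms(3) unfolding reach_def by blast
  have l: "length qs = Suc (length w)" using qs by (simp add: is_run_def)
  show ?thesis
  proof (cases w)
    case Nil
    then obtain x where "qs = [x]" using l by (cases qs) auto
    thus ?thesis using qs assms(2) by simp
  next
    case (Cons a w')
    have "(qs ! length w', w ! length w', qs ! Suc (length w')) \<in> trans A"
      using qs(1) Cons by (simp add: is_run_def)
    moreover have "qs ! Suc (length w') = r" using qs(3) l Cons nth_len_last[of qs "Suc (length w')"] by simp
    ultimately show ?thesis using assms(1) unfolding wf_nfa_def by blast
  qed
qed

lemma reach_bwd_states: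
  assumes "wf_nfa A" "q \<in> states A" "reach A r w q"
  shows "r \<in> states A"
proof -
  obtain qs where qs: "is_run A qs w" "hd qs = r" "last qs = q" using assms(3) unfolding reach_def by blast
  have l: "length qs = Suc (length w)" using qs by (simp add: is_run_def)
  show ?thesis
  proof (cases w)
    case Nil
    then obtain x where "qs = [x]" using l by (cases qs) auto
    thus ?thesis using qs assms(2) by simp
  next
    case (Cons a w')
    have "0 < length w" using Cons by simp
    hence "(qs ! 0, w ! 0, qs ! Suc 0) \<in> trans A"
      using qs(1) unfolding is_run_def by blast
    moreover have "qs ! 0 = r" using qs(2) l hd_conv_nth[of qs] by fastforce
    ultimately show ?thesis using assms(1) unfolding wf_nfa_def by blast
  qed
qed

lemma fwd_sub:
  assumes wf: "wf_nfa A" shows "fwd_det_states A \<subseteq> Pow (states A)"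
proof
  fix X assume "X \<in> fwd_det_states A"
  then obtain w where X: "X = delta_set A (init A) w" unfolding fwd_det_states_def by blast
  show "X \<in> Pow (states A)"
  proof (rule PowI, rule subsetI)
    fix r assume "r \<in> X"
    then obtain q where q: "q \<in> init A" "reach A q w r" unfolding X delta_set_def by blast
    have "q \<in> states A" using q(1) wf unfolding wf_nfa_def by blast
    thus "r \<in> states A" using reach_fwd_states[OF wf _ q(2)] by simp
  qed
qed

lemma bwd_sub:
  assumes wf: "wf_nfa A" shows "bwd_det_states A \<subseteq> Pow (states A)"
proof
  fix X assume "X \<in> bwd_det_states A"
  then obtain w where X: "X = delta_inv A w (final A)" unfolding bwd_det_states_def by blast
  show "X \<in> Pow (states A)"
  proof (rule PowI, rule subsetI)
    fix r assume "r \<in> X"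
    then obtain q where q: "q \<in> final A" "reach A r w q" unfolding X delta_inv_def by blast
    have "q \<in> states A" using q(1) wf unfolding wf_nfa_def by blast
    thus "r \<in> states A" using reach_bwd_states[OF wf _ q(2)] by simp
  qed
qed

lemma inter_le1:
  assumes "is_ufa A" "X \<in> fwd_det_states A" "Y \<in> bwd_det_states A"
  shows "card (X \<inter> Y) \<le> 1"
proof -
  obtain u where u: "u \<in> lists (alphabet A)" "X = delta_set A (init A) u"
    using assms(2) unfolding fwd_det_states_def by blast
  obtain v where v: "v \<in> lists (alphabet A)" "Y = delta_inv A v (final A)"
    using assms(3) unfolding bwd_det_states_def by blast
  have key: "\<exists>ps. accepting_run A ps (u @ v) \<and> ps ! length u = q" if q: "q \<in> X \<inter> Y" for q
  proof -
    obtain i qs where a: "i \<in> init A" "is_run A qs u" "hd qs = i" "last qs = q"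
      using q u(2) unfolding delta_set_def reach_def by blast
    obtain f rs where b: "f \<in> final A" "is_run A rs v" "hd rs = q" "last rs = f"
      using q v(2) unfolding delta_inv_def reach_def by blast
    have lq: "last qs = hd rs" using a b by simp
    note r = run_concat[OF a(2) b(2) lq] and h = concat_hd_last[OF a(2) b(2) lq]
    have "accepting_run A (qs @ tl rs) (u @ v)"
      unfolding accepting_run_def using r h a b by simp
    moreover have "(qs @ tl rs) ! length u = q" using h a by simp
    ultimately show ?thesis by blast
  qed
  have uv: "u @ v \<in> lists (alphabet A)" using u v by simp
  have "\<forall>x\<in>X \<inter> Y. \<forall>y\<in>X \<inter> Y. x = y"
  proof (intro ballI)
    fix x y assume "x \<in> X \<inter> Y" "y \<in> X \<inter> Y"
    then obtain ps1 ps2 where "accepting_run A ps1 (u @ v)" "ps1 ! length u = x"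
        "accepting_run A ps2 (u @ v)" "ps2 ! length u = y" using key by blast
    moreover have "\<forall>w \<in> lists (alphabet A). \<forall>qs rs. accepting_run A qs w \<and> accepting_run A rs w \<longrightarrow> qs = rs"
      using assms(1) unfolding is_ufa_def by blast
    ultimately have "ps1 = ps2" using uv by blast
    thus "x = y" using \<open>ps1 ! length u = x\<close> \<open>ps2 ! length u = y\<close> by simp
  qed
  thus ?thesis by (cases "finite (X \<inter> Y)") (simp_all add: card_le_Suc0_iff_eq)
qed
theorem mainTheorem2:
  fixes A :: "('q, 'a) nfa"
  assumes "is_ufa A"
      and "card (states A) = n"
  shows "real (card (fwd_det_states A)) \<le> sqrt (real n + 1) * 2 powr (real n / 2)
       \<or> real (card (bwd_det_states A)) \<le> sqrt (real n + 1) * 2 powr (real n / 2)"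
proof (rule ccontr)
  have wf: "wf_nfa A" using assms(1) by (simp add: is_ufa_def)
  hence fin: "finite (states A)" by (simp add: wf_nfa_def)
  have N: "card (fwd_det_states A) * card (bwd_det_states A) \<le> (n + 1) * 2 ^ n"
    using one_bound[OF fin fwd_sub[OF wf] bwd_sub[OF wf]] inter_le1[OF assms(1)] assms(2) by blast
  define B where "B = sqrt (real n + 1) * 2 powr (real n / 2)"
  have B0: "0 \<le> B" unfolding B_def by simp
  have p: "(2::real) powr (real n / 2) * 2 powr (real n / 2) = 2 ^ n"
    by (simp add: powr_add[symmetric] powr_realpow)
  have s: "sqrt (real n + 1) * sqrt (real n + 1) = real n + 1" by simp
  have "B * B = (sqrt (real n + 1) * sqrt (real n + 1)) * (2 powr (real n / 2) * 2 powr (real n / 2))"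
    unfolding B_def by (simp only: mult_ac)
  hence BB: "B * B = (real n + 1) * 2 ^ n" using p s by simp
  assume "\<not> ?thesis"
  hence c: "B < real (card (fwd_det_states A))" "B < real (card (bwd_det_states A))"
    unfolding B_def by auto
  have "B * B < real (card (fwd_det_states A)) * real (card (bwd_det_states A))"
    using c B0 by (meson mult_strict_mono' )
  also have "\<dots> \<le> (real n + 1) * 2 ^ n"
  proof -
    have "real (card (fwd_det_states A) * card (bwd_det_states A)) \<le> real ((n + 1) * 2 ^ n)"
      using N by (simp only: of_nat_le_iff)
    thus ?thesis by (simp add: algebra_simps)
  qed
  finally show False using BB by simp
qed

end
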